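(* Let $G=(V,A,w)$ be a weighted weak equilibrium graph. Then the distance between any two rich leaves of $G$ is at most $2$.
   Context: A weighted directed graph $G=(V,A,w)$ has vertex set $V$, arc set $A$ and weight function $w:V\to\mathbb{Z}^+$ (positive integers). $U(G)$ is the undirected multigraph obtained by ignoring arc directions; $\operatorname{dist}(u,v)$ is the distance in $U(G)$, defined to be $|V|^2$ if $u,v$ are in different components. The cost of a vertex $u$ is $c(u)=\sum_{v\in V}w(v)\operatorname{dist}(u,v)$. $G$ is a weak equilibrium graph if for every arc $\overrightarrow{uv}\in A$ and every vertex $x$ with $\overrightarrow{ux}\notin A$ (and $x\ne u$), replacing the arc $\overrightarrow{uv}$ by $\overrightarrow{ux}$ does not decrease the cost of $u$. A leaf is a vertex of degree $1$ in $U(G)$; a rich leaf is a leaf with outdegree one (i.e. it owns its unique incident arc). *)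

theory Defs
  imports Main
begin

definition weighted_digraph :: "'a set \<Rightarrow> ('a \<times> 'a) set \<Rightarrow> ('a \<Rightarrow> nat) \<Rightarrow> bool" where
  "weighted_digraph V A w \<longleftrightarrow> finite V \<and> A \<subseteq> V \<times> V \<and> (\<forall>u. (u, u) \<notin> A) \<and> (\<forall>v\<in>V. w v > 0)"

definition uadj :: "('a \<times> 'a) set \<Rightarrow> 'a \<Rightarrow> 'a \<Rightarrow> bool" where
  "uadj A u v \<longleftrightarrow> (u, v) \<in> A \<or> (v, u) \<in> A"

definition uwalk :: "('a \<times> 'a) set \<Rightarrow> 'a \<Rightarrow> 'a \<Rightarrow> nat \<Rightarrow> bool" where
  "uwalk A u v n \<longleftrightarrow> (\<exists>p. p 0 = u \<and> p n = v \<and> (\<forall>i<n. uadj A (p i) (p (Suc i))))"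

definition gdist :: "'a set \<Rightarrow> ('a \<times> 'a) set \<Rightarrow> 'a \<Rightarrow> 'a \<Rightarrow> nat" where
  "gdist V A u v = (if \<exists>n. uwalk A u v n then (LEAST n. uwalk A u v n) else card V ^ 2)"

definition cost :: "'a set \<Rightarrow> ('a \<times> 'a) set \<Rightarrow> ('a \<Rightarrow> nat) \<Rightarrow> 'a \<Rightarrow> nat" where
  "cost V A w u = (\<Sum>v\<in>V. w v * gdist V A u v)"

definition weak_equilibrium :: "'a set \<Rightarrow> ('a \<times> 'a) set \<Rightarrow> ('a \<Rightarrow> nat) \<Rightarrow> bool" where
  "weak_equilibrium V A w \<longleftrightarrow>
     (\<forall>u v x. (u, v) \<in> A \<and> x \<in> V \<and> x \<noteq> u \<and> (u, x) \<notin> A \<longrightarrow>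
        cost V A w u \<le> cost V (insert (u, x) (A - {(u, v)})) w u)"

definition outdeg :: "('a \<times> 'a) set \<Rightarrow> 'a \<Rightarrow> nat" where
  "outdeg A u = card {a \<in> A. fst a = u}"

definition indeg :: "('a \<times> 'a) set \<Rightarrow> 'a \<Rightarrow> nat" where
  "indeg A u = card {a \<in> A. snd a = u}"

text \<open>Degree in the multigraph U(G) (arcs uv and vu give two parallel edges).\<close>
definition udeg :: "('a \<times> 'a) set \<Rightarrow> 'a \<Rightarrow> nat" where
  "udeg A u = outdeg A u + indeg A u"

definition is_leaf :: "('a \<times> 'a) set \<Rightarrow> 'a \<Rightarrow> bool" where
  "is_leaf A u \<longleftrightarrow> udeg A u = 1"

definition rich_leaf :: "('a \<times> 'a) set \<Rightarrow> 'a \<Rightarrow> bool" where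
  "rich_leaf A u \<longleftrightarrow> is_leaf A u \<and> outdeg A u = 1"

end

theory Submission
  imports Defs
begin

lemma uadj_sym: "uadj A x y = uadj A y x" by (auto simp: uadj_def)

lemma uwalk_sym: assumes "uwalk A s t n" shows "uwalk A t s n"
proof -
  obtain p where p: "p 0 = s" "p n = t" "\<forall>i<n. uadj A (p i) (p (Suc i))"
    using assms unfolding uwalk_def by blast
  define q where "q i = p (n - i)" for i
  have "\<forall>i<n. uadj A (q i) (q (Suc i))"
  proof (intro allI impI)
    fix i assume i: "i < n"
    define j where "j = n - Suc i"
    have "j < n" "Suc j = n - i" using i by (auto simp: j_def)
    then have "uadj A (p j) (p (Suc j))" using p by blast
    then show "uadj A (q i) (q (Suc i))" unfolding q_def
      using \<open>Suc j = n - i\<close> j_def uadj_sym by metis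
  qed
  moreover have "q 0 = t" "q n = s" using p by (auto simp: q_def)
  ultimately show ?thesis unfolding uwalk_def by blast
qed

lemma gdist_sym: "gdist V A s t = gdist V A t s"
proof -
  have eq: "uwalk A s t = uwalk A t s" by (rule ext) (meson uwalk_sym)
  show ?thesis unfolding gdist_def eq by simp
qed

lemma gdist_le: assumes "uwalk A s t n" shows "gdist V A s t \<le> n"
  using assms unfolding gdist_def by (auto intro: Least_le)

lemma gdist_refl: "gdist V A s s = 0"
proof -
  have "uwalk A s s 0" unfolding uwalk_def by (rule exI[of _ "\<lambda>_. s"]) simp
  then show ?thesis using gdist_le by fastforce
qed

lemma gdist_two: assumes "uadj A s m" "uadj A m t" shows "gdist V A s t \<le> 2"
proof -
  define p where "p i = (if i = 0 then s else if i = 1 then m else t)" for i :: nat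
  have "\<forall>i<2. uadj A (p i) (p (Suc i))"
  proof (intro allI impI)
    fix i :: nat assume "i < 2"
    then have "i = 0 \<or> i = 1" by auto
    then show "uadj A (p i) (p (Suc i))" using assms by (auto simp: p_def)
  qed
  then have "uwalk A s t 2" unfolding uwalk_def by (intro exI[of _ p]) (auto simp: p_def)
  then show ?thesis by (rule gdist_le)
qed

lemma shorten:
  assumes p: "p 0 = s" "p n = t" "\<forall>i<n. uadj A (p i) (p (Suc i))"
    and j: "j + 2 \<le> n" "p j = p (j + 2)"
  shows "uwalk A s t (n - 2)"
proof -
  define q where "q k = (if k \<le> j then p k else p (k + 2))" for k
  have "q 0 = s" using p by (simp add: q_def)
  moreover have "q (n - 2) = t"
  proof (cases "n - 2 \<le> j")
    case True
    then have "n - 2 = j" "n = j + 2" using j by auto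
    then show ?thesis using p j by (simp add: q_def)
  next
    case False
    then have "n - 2 + 2 = n" using j by auto
    then show ?thesis using p False by (simp add: q_def)
  qed
  moreover have "\<forall>k<n-2. uadj A (q k) (q (Suc k))"
  proof (intro allI impI)
    fix k assume k: "k < n - 2"
    consider "k < j" | "k = j" | "k > j" by linarith
    then show "uadj A (q k) (q (Suc k))"
    proof cases
      case 1 then show ?thesis using p k j by (auto simp: q_def)
    next
      case 2
      have "uadj A (p (j+2)) (p (Suc (j+2)))" using p k 2 by auto
      then show ?thesis using 2 j by (simp add: q_def)
    next
      case 3
      have "uadj A (p (k+2)) (p (Suc (k+2)))" using p k by auto
      then show ?thesis using 3 by (simp add: q_def)
    qed
  qed
  ultimately show ?thesis unfolding uwalk_def by blast
qed

locale swapctx =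
  fixes A :: "('a \<times> 'a) set" and u v a b :: 'a
  assumes ua: "(u, a) \<in> A" and uonly: "\<And>y. (u, y) \<in> A \<Longrightarrow> y = a"
    and uin: "\<And>y. (y, u) \<notin> A"
    and vb: "(v, b) \<in> A" and vonly: "\<And>y. (v, y) \<in> A \<Longrightarrow> y = b"
    and vin: "\<And>y. (y, v) \<notin> A"
    and uv: "u \<noteq> v" and bu: "b \<noteq> u"
begin

definition "A' = insert (u, b) (A - {(u, a)})"

lemma fwd: assumes "uwalk A' u x n" "x \<noteq> u" shows "uwalk A v x n"
proof -
  obtain p where p: "p 0 = u" "p n = x" "\<forall>i<n. uadj A' (p i) (p (Suc i))"
    using assms unfolding uwalk_def by blast
  define q where "q i = (if p i = u then v else p i)" for i
  have adjA': "uadj A' u y \<Longrightarrow> y = b" for y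
    using uonly uin bu unfolding uadj_def A'_def by auto
  have "\<forall>i<n. uadj A (q i) (q (Suc i))"
  proof (intro allI impI)
    fix i assume i: "i < n"
    have e: "uadj A' (p i) (p (Suc i))" using p i by blast
    show "uadj A (q i) (q (Suc i))"
    proof (cases "p i = u")
      case True
      then have "p (Suc i) = b" using adjA' e by auto
      then show ?thesis using True bu vb by (auto simp: q_def uadj_def)
    next
      case f1: False
      show ?thesis
      proof (cases "p (Suc i) = u")
        case True
        then have "p i = b" using adjA' e uadj_sym by metis
        then show ?thesis using True bu vb by (auto simp: q_def uadj_def)
      next
        case False
        then show ?thesis using f1 e by (auto simp: q_def uadj_def A'_def)
      qed
    qed
  qed
  moreover have "q 0 = v" "q n = x" using p assms by (auto simp: q_def)
  ultimately show ?thesis unfolding uwalk_def by blast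
qed

lemma bwd:
  assumes "uwalk A v x n" "\<forall>m<n. \<not> uwalk A v x m" "x \<noteq> u" "x \<noteq> v"
  shows "uwalk A' u x n"
proof -
  obtain p where p: "p 0 = v" "p n = x" "\<forall>i<n. uadj A (p i) (p (Suc i))"
    using assms unfolding uwalk_def by blast
  have adju: "uadj A y u \<Longrightarrow> y = a" for y
    using uonly uin unfolding uadj_def by auto
  have avoid: "p i \<noteq> u" if "i \<le> n" for i
  proof
    assume pu: "p i = u"
    have "i \<noteq> 0"
    proof
      assume "i = 0"
      with pu p(1) have "u = v" by simp
      with uv show False by simp
    qed
    moreover have "i \<noteq> n" using pu p(2) assms(3) by auto
    ultimately have i: "0 < i" "i < n" using that by auto
    have "i - 1 < n" "Suc (i - 1) = i" using i by auto
    then have "uadj A (p (i - 1)) (p (Suc (i - 1)))" using p(3) by blast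
    then have "p (i - 1) = a" using adju pu i by simp
    moreover have "uadj A (p i) (p (Suc i))" using p i by auto
    then have "p (Suc i) = a" using adju pu uadj_sym by metis
    ultimately have "p (i - 1) = p (i - 1 + 2)" using i by simp
    moreover have "i - 1 + 2 \<le> n" using i by auto
    ultimately have "uwalk A v x (n - 2)" using shorten[OF p] by blast
    then show False using assms(2) i by auto
  qed
  have n0: "n > 0" using p assms(4) by (cases n) auto
  define q where "q i = (if i = 0 then u else p i)" for i
  have "\<forall>i<n. uadj A' (q i) (q (Suc i))"
  proof (intro allI impI)
    fix i assume i: "i < n"
    have e: "uadj A (p i) (p (Suc i))" using p i by blast
    show "uadj A' (q i) (q (Suc i))"
    proof (cases "i = 0")
      case True
      then have "p 1 = b" using e p vonly vin unfolding uadj_def by auto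
      then show ?thesis using True by (auto simp: q_def uadj_def A'_def)
    next
      case False
      have "p i \<noteq> u" "p (Suc i) \<noteq> u" using avoid i by auto
      then show ?thesis using False e by (auto simp: q_def uadj_def A'_def)
    qed
  qed
  moreover have "q 0 = u" "q n = x" using p n0 by (auto simp: q_def)
  ultimately show ?thesis unfolding uwalk_def by blast
qed

lemma swap_le: assumes "x \<noteq> u" "x \<noteq> v" shows "gdist V A' u x \<le> gdist V A v x"
proof (cases "\<exists>n. uwalk A v x n")
  case True
  define n0 where "n0 = (LEAST n. uwalk A v x n)"
  have w: "uwalk A v x n0" using True LeastI_ex n0_def by metis
  have m: "\<forall>m<n0. \<not> uwalk A v x m" using not_less_Least n0_def by blast
  have "uwalk A' u x n0" using bwd[OF w m assms] .
  then have "gdist V A' u x \<le> n0" by (rule gdist_le)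
  moreover have "gdist V A v x = n0" using True by (simp add: gdist_def n0_def)
  ultimately show ?thesis by simp
next
  case False
  then have "\<not> (\<exists>n. uwalk A' u x n)" using fwd assms by blast
  then show ?thesis using False by (simp add: gdist_def)
qed

lemma two: "gdist V A' u v \<le> 2"
proof -
  have "uadj A' u b" by (auto simp: uadj_def A'_def)
  moreover have "uadj A' b v" using vb uv by (auto simp: uadj_def A'_def)
  ultimately show ?thesis by (rule gdist_two)
qed

end

lemma sum_split2:
  assumes "finite V" "u \<in> V" "v \<in> V" "u \<noteq> v"
  shows "sum f V = f u + f v + sum f (V - {u, v})"
proof -
  have "sum f V = f u + sum f (V - {u})" by (rule sum.remove[OF assms(1,2)])
  also have "sum f (V - {u}) = f v + sum f (V - {u} - {v})"
    using assms by (intro sum.remove) auto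
  also have "V - {u} - {v} = V - {u, v}" by auto
  finally show ?thesis by (simp add: add.assoc)
qed

lemma leaf_info:
  assumes "finite A" "rich_leaf A u"
  shows "\<exists>a. (u, a) \<in> A \<and> (\<forall>y. (u, y) \<in> A \<longrightarrow> y = a) \<and> (\<forall>y. (y, u) \<notin> A)"
proof -
  have o: "card {e \<in> A. fst e = u} = 1" and i: "card {e \<in> A. snd e = u} = 0"
    using assms(2) unfolding rich_leaf_def is_leaf_def udeg_def outdeg_def indeg_def by linarith+
  obtain e where e: "{e \<in> A. fst e = u} = {e}" using card_1_singletonE[OF o] by metis
  have "finite {e \<in> A. snd e = u}" using assms(1) by simp
  then have emp: "{e \<in> A. snd e = u} = {}" using i by (metis card_0_eq)
  have nin: "\<forall>y. (y, u) \<notin> A"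
  proof (intro allI notI)
    fix y assume "(y, u) \<in> A"
    then have "(y, u) \<in> {e \<in> A. snd e = u}" by simp
    then show False using emp by simp
  qed
  have em: "e \<in> {e \<in> A. fst e = u}" using e by simp
  then have "fst e = u" by simp
  then obtain a where ea: "e = (u, a)" by (metis prod.collapse)
  have r1: "(u, a) \<in> A" using em ea by simp
  have r2: "\<forall>y. (u, y) \<in> A \<longrightarrow> y = a"
  proof (intro allI impI)
    fix y assume "(u, y) \<in> A"
    then have "(u, y) \<in> {e \<in> A. fst e = u}" by simp
    then show "y = a" using e ea by simp
  qed
  have "(u, a) \<in> A \<and> (\<forall>y. (u, y) \<in> A \<longrightarrow> y = a) \<and> (\<forall>y. (y, u) \<notin> A)"
    using r1 r2 nin by (intro conjI)
  then show ?thesis by (rule exI)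
qed

theorem mainTheorem20:
  fixes V :: "'a set" and A :: "('a \<times> 'a) set" and w :: "'a \<Rightarrow> nat"
  assumes "weighted_digraph V A w"
    and "weak_equilibrium V A w"
    and "u \<in> V" and "v \<in> V"
    and "rich_leaf A u" and "rich_leaf A v"
  shows "gdist V A u v \<le> 2"
proof (rule ccontr)
  assume "\<not> ?thesis"
  then have d3: "gdist V A u v \<ge> 3" by simp
  have fV: "finite V" and AV: "A \<subseteq> V \<times> V" and nl: "\<forall>z. (z, z) \<notin> A"
    and wp: "\<forall>x\<in>V. w x > 0"
    using assms(1) unfolding weighted_digraph_def by auto
  have fA: "finite A" using fV AV finite_subset by blast
  obtain a where ua: "(u, a) \<in> A" and uo: "\<forall>y. (u, y) \<in> A \<longrightarrow> y = a" and ui: "\<forall>y. (y, u) \<notin> A"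
    using leaf_info[OF fA assms(5)] by blast
  obtain b where vb: "(v, b) \<in> A" and vo: "\<forall>y. (v, y) \<in> A \<longrightarrow> y = b" and vi: "\<forall>y. (y, v) \<notin> A"
    using leaf_info[OF fA assms(6)] by blast
  have uv: "u \<noteq> v" using d3 gdist_refl by (metis not_numeral_le_zero)
  have ab: "a \<noteq> b"
  proof
    assume "a = b"
    then have "gdist V A u v \<le> 2" using ua vb by (intro gdist_two[of A u a]) (auto simp: uadj_def)
    then show False using d3 by simp
  qed
  have bu: "b \<noteq> u" using vb ui by auto
  have av: "a \<noteq> v" using ua vi by auto
  have aV: "a \<in> V" and bV: "b \<in> V" using ua vb AV by auto
  have "swapctx A u v a b" unfolding swapctx_def using ua uo ui vb vo vi uv bu by blast
  then interpret s1: swapctx A u v a b .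
  have "swapctx A v u b a" unfolding swapctx_def using ua uo ui vb vo vi uv av by blast
  then interpret s2: swapctx A v u b a .
  have ub: "(u, b) \<notin> A" using uo ab by auto
  have va: "(v, a) \<notin> A" using vo ab by auto
  have e1: "cost V A w u \<le> cost V s1.A' w u"
    using assms(2) ua bV bu ub unfolding weak_equilibrium_def s1.A'_def by blast
  have e2: "cost V A w v \<le> cost V s2.A' w v"
    using assms(2) vb aV av va unfolding weak_equilibrium_def s2.A'_def by blast
  define R where "R = V - {u, v}"
  define Tu where "Tu = (\<Sum>x\<in>R. w x * gdist V A u x)"
  define Tv where "Tv = (\<Sum>x\<in>R. w x * gdist V A v x)"
  define S1 where "S1 = (\<Sum>x\<in>R. w x * gdist V s1.A' u x)"
  define S2 where "S2 = (\<Sum>x\<in>R. w x * gdist V s2.A' v x)"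
  have S1le: "S1 \<le> Tv" unfolding S1_def Tv_def R_def
    by (rule sum_mono) (auto intro: mult_le_mono2 s1.swap_le)
  have S2le: "S2 \<le> Tu" unfolding S2_def Tu_def R_def
    by (rule sum_mono) (auto intro: mult_le_mono2 s2.swap_le)
  define d where "d = gdist V A u v"
  have dsym: "gdist V A v u = d" using gdist_sym d_def by metis
  have c1: "cost V A w u = w v * d + Tu"
    unfolding cost_def Tu_def R_def d_def
    using sum_split2[OF fV assms(3,4) uv, of "\<lambda>x. w x * gdist V A u x"] by (simp add: gdist_refl)
  have c2: "cost V A w v = w u * d + Tv"
    unfolding cost_def Tv_def R_def using dsym
    using sum_split2[OF fV assms(3,4) uv, of "\<lambda>x. w x * gdist V A v x"] by (simp add: gdist_refl)
  have c3: "cost V s1.A' w u \<le> w v * 2 + S1"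
  proof -
    have "cost V s1.A' w u = w v * gdist V s1.A' u v + S1"
      unfolding cost_def S1_def R_def
      using sum_split2[OF fV assms(3,4) uv, of "\<lambda>x. w x * gdist V s1.A' u x"] by (simp add: gdist_refl)
    moreover have "w v * gdist V s1.A' u v \<le> w v * 2" using s1.two by (rule mult_le_mono2)
    ultimately show ?thesis by simp
  qed
  have c4: "cost V s2.A' w v \<le> w u * 2 + S2"
  proof -
    have "cost V s2.A' w v = w u * gdist V s2.A' v u + S2"
      unfolding cost_def S2_def R_def
      using sum_split2[OF fV assms(3,4) uv, of "\<lambda>x. w x * gdist V s2.A' v x"] by (simp add: gdist_refl)
    moreover have "w u * gdist V s2.A' v u \<le> w u * 2" using s2.two by (rule mult_le_mono2)
    ultimately show ?thesis by simp
  qed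
  have m1: "w v * 3 \<le> w v * d" using d3 d_def by simp
  have m2: "w u * 3 \<le> w u * d" using d3 d_def by simp
  have "w u > 0" using wp assms(3) by auto
  have f1: "w v * d + Tu \<le> w v * 2 + Tv" using e1 c1 c3 S1le by linarith
  have f2: "w u * d + Tv \<le> w u * 2 + Tu" using e2 c2 c4 S2le by linarith
  have "w v * d + w u * d \<le> w v * 2 + w u * 2" using f1 f2 by linarith
  then have "w v * 3 + w u * 3 \<le> w v * 2 + w u * 2" using m1 m2 by linarith
  then show False using \<open>w u > 0\<close> by linarith
qed

end
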